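(* Let $e\ge4$ and let $Q$ be a convex polygon with $e-1$ vertices, one of which is marked as distinguished, the remaining vertices being numbered $2,3,\dots,e-1$ in cyclic order starting next to the distinguished vertex. To a triangulation $\mathcal T$ of $Q$ (a subdivision into triangles by non-crossing diagonals) associate the colouring of $\triangle_{2,e-1}$ in which a dot $(\delta,\varepsilon)$ is black if and only if the vertices $\delta$ and $\varepsilon$ are joined by a diagonal of $\mathcal T$. This assignment is a bijection between the set of triangulations of $Q$ and the set of sparse colourings of $\triangle_{2,e-1}$.
   Context: Dots are pairs of integers $(\alpha,\beta)$. For integers $\delta<\varepsilon$, the triangle $\triangle_{\delta,\varepsilon}$ is the set of dots $(\alpha,\beta)$ with $\delta\le\alpha$, $\beta\le\varepsilon$ and $\beta-\alpha\ge 2$. For a dot $(\alpha,\beta)\in\triangle_{\delta,\varepsilon}$, the sub-triangle $\triangle_{\alpha,\beta}$ is defined by the same rule. A coloured triangle $\triangle_{\delta,\varepsilon}$ is sparse if for every dot $(\alpha,\beta)\in\triangle_{\delta,\varepsilon}$ (including the vertex) the number of black dots in $\triangle_{\alpha,\beta}$ is at most $\beta-\alpha-1$, with equality if and only if $(\alpha,\beta)$ is black. *)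

theory Defs
  imports Main
begin

definition tri :: "int \<Rightarrow> int \<Rightarrow> (int \<times> int) set" where
  "tri \<delta> \<epsilon> = {(\<alpha>, \<beta>). \<delta> \<le> \<alpha> \<and> \<beta> \<le> \<epsilon> \<and> \<beta> - \<alpha> \<ge> 2}"

text \<open>A colouring of a triangle is given by its set B of black dots (B is a subset of the triangle).
  Sparseness of the coloured triangle.\<close>
definition sparse :: "int \<Rightarrow> int \<Rightarrow> (int \<times> int) set \<Rightarrow> bool" where
  "sparse \<delta> \<epsilon> B \<longleftrightarrow>
     (\<forall>(\<alpha>, \<beta>) \<in> tri \<delta> \<epsilon>.
        int (card (B \<inter> tri \<alpha> \<beta>)) \<le> \<beta> - \<alpha> - 1 \<and>
        (int (card (B \<inter> tri \<alpha> \<beta>)) = \<beta> - \<alpha> - 1 \<longleftrightarrow> (\<alpha>, \<beta>) \<in> B))"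

definition sparse_colourings :: "int \<Rightarrow> int \<Rightarrow> (int \<times> int) set set" where
  "sparse_colourings \<delta> \<epsilon> = {B. B \<subseteq> tri \<delta> \<epsilon> \<and> sparse \<delta> \<epsilon> B}"

text \<open>Convex polygon with n vertices labelled 1..n in cyclic order (vertex 1 distinguished).
  A diagonal joining vertices i < j is encoded as the pair (i, j).\<close>
definition diagonals :: "int \<Rightarrow> (int \<times> int) set" where
  "diagonals n = {(i, j). 1 \<le> i \<and> j \<le> n \<and> j - i \<ge> 2 \<and> \<not> (i = 1 \<and> j = n)}"

text \<open>Two diagonals of a convex polygon cross (in their interiors) iff their endpoints interleave.\<close>
definition crosses :: "int \<times> int \<Rightarrow> int \<times> int \<Rightarrow> bool" where
  "crosses p q \<longleftrightarrow> (case p of (a, b) \<Rightarrow> case q of (c, d) \<Rightarrow>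
       (a < c \<and> c < b \<and> b < d) \<or> (c < a \<and> a < d \<and> d < b))"

definition noncrossing :: "int \<Rightarrow> (int \<times> int) set \<Rightarrow> bool" where
  "noncrossing n T \<longleftrightarrow> T \<subseteq> diagonals n \<and> (\<forall>p\<in>T. \<forall>q\<in>T. \<not> crosses p q)"

text \<open>A triangulation (subdivision into triangles by non-crossing diagonals) of the convex
  n-gon is identified with its set of diagonals: a maximal set of pairwise non-crossing diagonals.\<close>
definition triangulation :: "int \<Rightarrow> (int \<times> int) set \<Rightarrow> bool" where
  "triangulation n T \<longleftrightarrow> noncrossing n T \<and> (\<forall>S. noncrossing n S \<and> T \<subseteq> S \<longrightarrow> S = T)"

definition triangulations :: "int \<Rightarrow> (int \<times> int) set set" where
  "triangulations n = {T. triangulation n T}"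

end

theory Submission
  imports Defs
begin

definition nc :: "(int \<times> int) set \<Rightarrow> bool" where
  "nc S \<longleftrightarrow> (\<forall>p\<in>S. \<forall>q\<in>S. \<not> crosses p q)"

lemma crosses_simp[simp]:
  "crosses (a,b) (c,d) \<longleftrightarrow> (a<c \<and> c<b \<and> b<d) \<or> (c<a \<and> a<d \<and> d<b)"
  by (simp add: crosses_def)

lemma tri_mem[simp]: "(x,y) \<in> tri a b \<longleftrightarrow> a \<le> x \<and> y \<le> b \<and> y - x \<ge> 2"
  by (simp add: tri_def)

lemma finite_tri: "finite (tri a b)"
proof (rule finite_subset)
  show "tri a b \<subseteq> {a..b} \<times> {a..b}" by (auto simp: tri_def)
qed auto

lemma nc_subset: "nc S \<Longrightarrow> X \<subseteq> S \<Longrightarrow> nc X"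
  unfolding nc_def by blast

lemma card_le_diff: "finite A \<Longrightarrow> card A \<le> card (A - {x}) + 1"
  by (cases "x \<in> A") (auto simp: card_Diff_singleton_if card_gt_0_iff)

lemma L1_aux:
  assumes "nat (b - a) = m" "S \<subseteq> tri a b" "nc S" "b - a \<ge> 2"
  shows "int (card (S - {(a,b)})) \<le> b - a - 2"
  using assms
proof (induction m arbitrary: a b S rule: less_induct)
  case (less m)
  have sub1: "int (card X) \<le> b' - a' - 1"
    if "X \<subseteq> tri a' b'" "nc X" "b' - a' \<ge> 1" "b' - a' < b - a" for X a' b'
  proof (cases "b' - a' \<ge> 2")
    case True
    have "int (card (X - {(a',b')})) \<le> b' - a' - 2"
    proof -
      have "nat (b' - a') < m" using that True less.prems(1,4) by linarith
      from less.IH[OF this refl that(1,2) True] show ?thesis .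
    qed
    moreover have "card X \<le> card (X - {(a',b')}) + 1"
      by (rule card_le_diff[OF finite_subset[OF that(1) finite_tri]])
    ultimately show ?thesis by linarith
  next
    case False
    then have "tri a' b' = {}" by (auto simp: tri_def)
    then have "X = {}" using that by auto
    then show ?thesis using that by simp
  qed
  define S' where "S' = S - {(a,b)}"
  have S'sub: "S' \<subseteq> tri a b" using less.prems S'_def by auto
  have ncS': "nc S'" using nc_subset less.prems S'_def by blast
  have finS': "finite S'" using finite_subset[OF S'sub finite_tri] .
  show ?case
  proof (cases "\<exists>j. (a,j) \<in> S'")
    case True
    define J where "J = {j. (a,j) \<in> S'}"
    have Jsub: "J \<subseteq> {a..b}" using S'sub J_def by auto
    have Jfin: "finite J" using finite_subset[OF Jsub] by simp
    have Jne: "J \<noteq> {}" using True J_def by auto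
    define k where "k = Max J"
    have kJ: "k \<in> J" using Jfin Jne k_def by simp
    have jle: "\<And>j. j \<in> J \<Longrightarrow> j \<le> k" using Jfin k_def by simp
    have ak: "(a,k) \<in> S'" using kJ J_def by simp
    have akt: "(a,k) \<in> tri a b" "(a,k) \<noteq> (a,b)" using ak S'sub S'_def by auto
    have k1: "k - a \<ge> 2" "k < b" using akt by auto
    have cover: "S' \<subseteq> (S' \<inter> tri a k) \<union> (S' \<inter> tri k b)"
    proof
      fix p assume pS: "p \<in> S'"
      obtain c d where p: "p = (c,d)" by fastforce
      have cd: "a \<le> c" "d \<le> b" "d - c \<ge> 2" using pS p S'sub by auto
      show "p \<in> (S' \<inter> tri a k) \<union> (S' \<inter> tri k b)"
      proof (cases "d \<le> k")
        case True then show ?thesis using pS p cd by auto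
      next
        case False
        show ?thesis
        proof (cases "c \<ge> k")
          case True then show ?thesis using pS p cd by auto
        next
          case c: False
          show ?thesis
          proof (cases "c = a")
            case True
            then have "d \<in> J" using pS p J_def by simp
            then show ?thesis using jle False by force
          next
            case ca: False
            have "crosses (a,k) (c,d)" using ca c False cd by simp
            then show ?thesis using ncS' pS p ak unfolding nc_def by blast
          qed
        qed
      qed
    qed
    have "card S' \<le> card ((S' \<inter> tri a k) \<union> (S' \<inter> tri k b))"
      by (rule card_mono) (use finite_tri cover in auto)
    also have "\<dots> \<le> card (S' \<inter> tri a k) + card (S' \<inter> tri k b)" by (rule card_Un_le)
    finally have "card S' \<le> card (S' \<inter> tri a k) + card (S' \<inter> tri k b)" .
    moreover have "int (card (S' \<inter> tri a k)) \<le> k - a - 1"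
      by (rule sub1[OF Int_lower2 nc_subset[OF ncS' Int_lower1]]) (use k1 in linarith)+
    moreover have "int (card (S' \<inter> tri k b)) \<le> b - k - 1"
      by (rule sub1[OF Int_lower2 nc_subset[OF ncS' Int_lower1]]) (use k1 in linarith)+
    ultimately have "int (card S') \<le> b - a - 2" by linarith
    then show ?thesis using S'_def by simp
  next
    case False
    have "S' \<subseteq> tri (a+1) b"
    proof
      fix p assume pS: "p \<in> S'"
      obtain c d where p: "p = (c,d)" by fastforce
      have "c \<noteq> a" using False pS p by auto
      then show "p \<in> tri (a+1) b" using pS p S'sub by auto
    qed
    then have "int (card S') \<le> b - (a+1) - 1"
      by (rule sub1[OF _ ncS']) (use less.prems(4) in linarith)+
    then show ?thesis using S'_def by simp
  qed
qed

lemma L1: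
  assumes "S \<subseteq> tri a b" "nc S" "b - a \<ge> 1"
  shows "int (card S) \<le> b - a - 1"
proof (cases "b - a \<ge> 2")
  case True
  have "int (card (S - {(a,b)})) \<le> b - a - 2" using L1_aux[OF refl assms(1,2) True] .
  moreover have "card S \<le> card (S - {(a,b)}) + 1"
    by (rule card_le_diff[OF finite_subset[OF assms(1) finite_tri]])
  ultimately show ?thesis by linarith
next
  case False
  then have "tri a b = {}" by (auto simp: tri_def)
  then show ?thesis using assms by simp
qed

lemma L1_strict:
  assumes "S \<subseteq> tri a b" "nc S" "b - a \<ge> 2" "(a,b) \<notin> S"
  shows "int (card S) \<le> b - a - 2"
  using L1_aux[OF refl assms(1-3)] assms(4) by simp

lemma L2_aux:
  assumes "nat (b - a) = m" "nc S" "(a,b) \<in> S" "b - a \<ge> 2"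
    "\<forall>p\<in>tri a b. (\<forall>q\<in>S. \<not> crosses p q) \<longrightarrow> p \<in> S"
  shows "int (card (S \<inter> tri a b)) \<ge> b - a - 1"
  using assms
proof (induction m arbitrary: a b rule: less_induct)
  case (less m)
  have sub: "int (card (S \<inter> tri a' b')) \<ge> b' - a' - 1"
    if "b' - a' \<ge> 1" "b' - a' < b - a" "b' - a' \<ge> 2 \<longrightarrow> (a',b') \<in> S"
       "tri a' b' \<subseteq> tri a b" for a' b'
  proof (cases "b' - a' \<ge> 2")
    case True
    have "nat (b' - a') < m" using that True less.prems(1,4) by linarith
    moreover have "\<forall>p\<in>tri a' b'. (\<forall>q\<in>S. \<not> crosses p q) \<longrightarrow> p \<in> S"
      using less.prems(5) that(4) by blast
    ultimately show ?thesis using less.IH[OF _ refl less.prems(2) _ True] that(3) True by blast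
  next
    case False
    then show ?thesis by simp
  qed
  define K where "K = {j \<in> {a+1..b-1}. j = a+1 \<or> (a,j) \<in> S}"
  have Kfin: "finite K" unfolding K_def by (rule finite_subset[of _ "{a+1..b-1}"]) auto
  have Kne: "a+1 \<in> K" using less.prems(4) K_def by simp
  define k where "k = Max K"
  have kK: "k \<in> K" using Kfin Kne k_def
    by (metis Max_in empty_iff)
  have jle: "\<And>j. j \<in> K \<Longrightarrow> j \<le> k" using Kfin k_def by simp
  have kb1: "a + 1 \<le> k" "k \<le> b - 1" using kK K_def by auto
  have akS: "k \<noteq> a + 1 \<Longrightarrow> (a,k) \<in> S" using kK K_def by auto
  have ncS: "\<And>p q. p \<in> S \<Longrightarrow> q \<in> S \<Longrightarrow> \<not> crosses p q" using less.prems(2) nc_def by blast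
  have kbS: "(k,b) \<in> S" if kb2: "b - k \<ge> 2"
  proof -
    have "(k,b) \<in> tri a b" using kb1 kb2 by simp
    moreover have "\<not> crosses (k,b) q" if qS: "q \<in> S" for q
    proof
      assume cr: "crosses (k,b) q"
      obtain c d where q: "q = (c,d)" by fastforce
      from cr q consider "k<c \<and> c<b \<and> b<d" | "c<k \<and> k<d \<and> d<b" by auto
      then show False
      proof cases
        case 1
        then have "crosses (a,b) (c,d)" using kb1 by simp
        then show False using ncS[OF less.prems(3)] qS q by blast
      next
        case 2
        show False
        proof (cases "c < a")
          case True
          then have "crosses (c,d) (a,b)" using 2 kb1 by simp
          then show False using ncS[OF _ less.prems(3)] qS q by blast
        next
          case ca: False
          show False
          proof (cases "c = a")
            case True
            then have "d \<in> K" using K_def 2 kb1 qS q by auto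
            then show False using jle 2 by force
          next
            case False
            then have "k \<noteq> a + 1" using ca 2 by auto
            then have "(a,k) \<in> S" using akS by simp
            moreover have "crosses (a,k) (c,d)" using False ca 2 by simp
            ultimately show False using ncS qS q by blast
          qed
        qed
      qed
    qed
    ultimately show ?thesis using less.prems(5) by blast
  qed
  have fin: "finite (S \<inter> tri a b)" using finite_tri by simp
  have U: "{(a,b)} \<union> (S \<inter> tri a k) \<union> (S \<inter> tri k b) \<subseteq> S \<inter> tri a b"
    using less.prems(3,4) kb1 by (auto simp: tri_def)
  have d1: "(a,b) \<notin> tri a k" "(a,b) \<notin> tri k b" using kb1 by auto
  have d2: "tri a k \<inter> tri k b = {}" by (auto simp: tri_def)
  have "card ({(a,b)} \<union> (S \<inter> tri a k) \<union> (S \<inter> tri k b))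
      = 1 + card (S \<inter> tri a k) + card (S \<inter> tri k b)"
  proof -
    have "card ((S \<inter> tri a k) \<union> (S \<inter> tri k b)) = card (S \<inter> tri a k) + card (S \<inter> tri k b)"
      by (rule card_Un_disjoint) (use d2 finite_tri in auto)
    moreover have "card ({(a,b)} \<union> ((S \<inter> tri a k) \<union> (S \<inter> tri k b))) = 1 + card ((S \<inter> tri a k) \<union> (S \<inter> tri k b))"
      using d1 finite_tri by (simp add: card_insert_if)
    ultimately show ?thesis by (simp add: Un_assoc)
  qed
  moreover have "card ({(a,b)} \<union> (S \<inter> tri a k) \<union> (S \<inter> tri k b)) \<le> card (S \<inter> tri a b)"
    using card_mono[OF fin U] .
  moreover have "int (card (S \<inter> tri a k)) \<ge> k - a - 1"
    by (rule sub) (use kb1 akS in \<open>auto simp: tri_def\<close>)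
  moreover have "int (card (S \<inter> tri k b)) \<ge> b - k - 1"
    by (rule sub) (use kb1 kbS in \<open>auto simp: tri_def\<close>)
  ultimately show ?case by linarith
qed

lemma crosses_sym: "crosses p q = crosses q p"
  by (cases p; cases q) auto

lemma tri_diag: "tri 2 n \<subseteq> diagonals n"
  by (auto simp: tri_def diagonals_def)

lemma tri_sub: "(\<alpha>,\<beta>) \<in> tri \<delta> \<epsilon> \<Longrightarrow> tri \<alpha> \<beta> \<subseteq> tri \<delta> \<epsilon>"
  by (auto simp: tri_def)

lemma triang_max:
  assumes "triangulation n T" "p \<in> diagonals n" "\<forall>q\<in>T. \<not> crosses p q"
  shows "p \<in> T"
proof -
  have nT: "noncrossing n T" using assms(1) unfolding triangulation_def by blast
  have pp: "\<not> crosses p p" by (cases p) auto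
  have "noncrossing n (insert p T)"
    unfolding noncrossing_def
  proof (intro conjI ballI)
    show "insert p T \<subseteq> diagonals n" using nT assms(2) unfolding noncrossing_def by blast
  next
    fix u v assume "u \<in> insert p T" "v \<in> insert p T"
    then show "\<not> crosses u v"
      using nT assms(3) pp crosses_sym[of _ p] unfolding noncrossing_def by blast
  qed
  then have "insert p T = T" using assms(1) unfolding triangulation_def by blast
  then show ?thesis by blast
qed

lemma partA:
  assumes T: "triangulation n T"
  shows "sparse 2 n (T \<inter> tri 2 n)"
  unfolding sparse_def
proof (intro ballI, clarify)
  fix \<alpha> \<beta> assume ab: "(\<alpha>,\<beta>) \<in> tri 2 n"
  have eq: "T \<inter> tri 2 n \<inter> tri \<alpha> \<beta> = T \<inter> tri \<alpha> \<beta>" using tri_sub[OF ab] by blast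
  have ncT: "nc T" using T unfolding triangulation_def noncrossing_def nc_def by blast
  have ncX: "nc (T \<inter> tri \<alpha> \<beta>)" using nc_subset[OF ncT] by blast
  have ge2: "\<beta> - \<alpha> \<ge> 2" using ab by simp
  have up: "int (card (T \<inter> tri \<alpha> \<beta>)) \<le> \<beta> - \<alpha> - 1"
    using L1[OF _ ncX] ge2 by auto
  show "int (card (T \<inter> tri 2 n \<inter> tri \<alpha> \<beta>)) \<le> \<beta> - \<alpha> - 1 \<and>
       (int (card (T \<inter> tri 2 n \<inter> tri \<alpha> \<beta>)) = \<beta> - \<alpha> - 1) = ((\<alpha>, \<beta>) \<in> T \<inter> tri 2 n)"
  proof (cases "(\<alpha>,\<beta>) \<in> T")
    case True
    have "\<forall>p\<in>tri \<alpha> \<beta>. (\<forall>q\<in>T. \<not> crosses p q) \<longrightarrow> p \<in> T"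
      using triang_max[OF T] tri_sub[OF ab] tri_diag by blast
    then have "int (card (T \<inter> tri \<alpha> \<beta>)) \<ge> \<beta> - \<alpha> - 1"
      using L2_aux[OF refl ncT True ge2] by blast
    then show ?thesis using up eq True ab by auto
  next
    case False
    have "int (card (T \<inter> tri \<alpha> \<beta>)) \<le> \<beta> - \<alpha> - 2"
      using L1_strict[OF _ ncX ge2] False by auto
    then show ?thesis using eq False by auto
  qed
qed

lemma inj_part:
  assumes T1: "triangulation n T1" and T2: "triangulation n T2"
    and eq: "T1 \<inter> tri 2 n = T2 \<inter> tri 2 n"
  shows "T1 \<subseteq> T2"
proof
  fix p assume pT1: "p \<in> T1"
  obtain x y where p: "p = (x,y)" by fastforce
  have pd: "p \<in> diagonals n" using T1 pT1 unfolding triangulation_def noncrossing_def by blast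
  then have xy: "1 \<le> x" "y \<le> n" "y - x \<ge> 2" "\<not> (x = 1 \<and> y = n)" using p by (auto simp: diagonals_def)
  show "p \<in> T2"
  proof (cases "x \<ge> 2")
    case True
    then have "p \<in> tri 2 n" using p xy by simp
    then show ?thesis using eq pT1 by blast
  next
    case False
    then have x1: "x = 1" using xy by simp
    have "\<not> crosses p q" if qT2: "q \<in> T2" for q
    proof
      assume cr: "crosses p q"
      obtain c d where q: "q = (c,d)" by fastforce
      have qd: "q \<in> diagonals n" using T2 qT2 unfolding triangulation_def noncrossing_def by blast
      then have cd: "1 \<le> c" "d \<le> n" "d - c \<ge> 2" using q by (auto simp: diagonals_def)
      have "1 < c" "c < y" "y < d" using cr p q x1 cd by auto
      then have "q \<in> tri 2 n" using q cd by simp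
      then have "q \<in> T1" using eq qT2 by blast
      then show False using T1 pT1 cr unfolding triangulation_def noncrossing_def by blast
    qed
    then show ?thesis using triang_max[OF T2 pd] by blast
  qed
qed

lemma sparse_black:
  assumes "sparse 2 n B" "(a,b) \<in> B" "(a,b) \<in> tri 2 n"
  shows "int (card (B \<inter> tri a b)) = b - a - 1"
  using assms unfolding sparse_def by fastforce

lemma sparse_le:
  assumes "sparse 2 n B" "(a,b) \<in> tri 2 n"
  shows "int (card (B \<inter> tri a b)) \<le> b - a - 1"
  using assms unfolding sparse_def by fastforce

lemma sparse_eq:
  assumes "sparse 2 n B" "(a,b) \<in> tri 2 n" "int (card (B \<inter> tri a b)) = b - a - 1"
  shows "(a,b) \<in> B"
  using assms unfolding sparse_def by fastforce

lemma sparse_nocross: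
  assumes sp: "sparse 2 n B" and Bsub: "B \<subseteq> tri 2 n"
    and ab: "(a,b) \<in> B" and cd: "(c,d) \<in> B" and o: "a < c" "c < b" "b < d"
  shows False
proof -
  have abt: "(a,b) \<in> tri 2 n" and cdt: "(c,d) \<in> tri 2 n" using ab cd Bsub by auto
  have adt: "(a,d) \<in> tri 2 n" using abt cdt o by simp
  have fab: "int (card (B \<inter> tri a b)) = b - a - 1" using sparse_black[OF sp ab abt] .
  have fcd: "int (card (B \<inter> tri c d)) = d - c - 1" using sparse_black[OF sp cd cdt] .
  have fcb: "int (card (B \<inter> tri c b)) \<le> b - c - 1"
  proof (cases "b - c \<ge> 2")
    case True
    then show ?thesis using sparse_le[OF sp] abt cdt by simp
  next
    case False
    then have "tri c b = {}" by (auto simp: tri_def)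
    then show ?thesis using o by simp
  qed
  have I: "(B \<inter> tri a b) \<inter> (B \<inter> tri c d) = B \<inter> tri c b" using o by (auto simp: tri_def)
  have cu: "card ((B \<inter> tri a b) \<union> (B \<inter> tri c d)) + card (B \<inter> tri c b)
     = card (B \<inter> tri a b) + card (B \<inter> tri c d)"
    using card_Un_Int[of "B \<inter> tri a b" "B \<inter> tri c d"] I finite_tri by simp
  have U: "insert (a,d) ((B \<inter> tri a b) \<union> (B \<inter> tri c d)) \<subseteq> insert (a,d) (B \<inter> tri a d)"
    using o by (auto simp: tri_def)
  have nin: "(a,d) \<notin> (B \<inter> tri a b) \<union> (B \<inter> tri c d)" using o by auto
  have "card ((B \<inter> tri a b) \<union> (B \<inter> tri c d)) \<le> card (B \<inter> tri a d)"
    by (rule card_mono) (use o finite_tri in \<open>auto simp: tri_def\<close>)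
  then have "int (card (B \<inter> tri a d)) \<ge> d - a - 1" using cu fab fcd fcb by linarith
  then have "int (card (B \<inter> tri a d)) = d - a - 1" using sparse_le[OF sp adt] by linarith
  then have adB: "(a,d) \<in> B" using sparse_eq[OF sp adt] by simp
  have "card (insert (a,d) ((B \<inter> tri a b) \<union> (B \<inter> tri c d))) \<le> card (B \<inter> tri a d)"
    by (rule card_mono) (use o finite_tri adB adt in \<open>auto simp: tri_def\<close>)
  then have "card ((B \<inter> tri a b) \<union> (B \<inter> tri c d)) + 1 \<le> card (B \<inter> tri a d)"
    using nin finite_tri by simp
  then show False using cu fab fcd fcb sparse_le[OF sp adt] by linarith
qed

lemma sparse_nc:
  assumes sp: "sparse 2 n B" and Bsub: "B \<subseteq> tri 2 n"
  shows "nc B"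
  unfolding nc_def
proof (intro ballI notI)
  fix p q assume pB: "p \<in> B" and qB: "q \<in> B" and cr: "crosses p q"
  obtain a b where p: "p = (a,b)" by fastforce
  obtain c d where q: "q = (c,d)" by fastforce
  from cr p q consider "a<c \<and> c<b \<and> b<d" | "c<a \<and> a<d \<and> d<b" by auto
  then show False
  proof cases
    case 1 then show False using sparse_nocross[OF sp Bsub, of a b c d] pB qB p q by blast
  next
    case 2 then show False using sparse_nocross[OF sp Bsub, of c d a b] pB qB p q by blast
  qed
qed

lemma surj_part:
  assumes sp: "sparse 2 n B" and Bsub: "B \<subseteq> tri 2 n"
  shows "\<exists>T. triangulation n T \<and> T \<inter> tri 2 n = B"
proof -
  have ncB: "nc B" using sparse_nc[OF sp Bsub] .
  have ncB': "\<And>p q. p \<in> B \<Longrightarrow> q \<in> B \<Longrightarrow> \<not> crosses p q" using ncB nc_def by blast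
  define F where "F = {(1::int, j) | j. 3 \<le> j \<and> j \<le> n - 1 \<and> (\<forall>c d. (c,d) \<in> B \<longrightarrow> \<not> (c < j \<and> j < d))}"
  define T where "T = B \<union> F"
  have TB: "T \<inter> tri 2 n = B" using Bsub unfolding T_def F_def by auto
  have Tdiag: "T \<subseteq> diagonals n" using Bsub tri_diag unfolding T_def F_def
    by (auto simp: diagonals_def)
  have Fcr: "\<not> crosses p q \<and> \<not> crosses q p" if pF: "p \<in> F" and qB: "q \<in> B" for p q
  proof -
    obtain j where p: "p = (1,j)" and j: "\<forall>c d. (c,d) \<in> B \<longrightarrow> \<not> (c < j \<and> j < d)"
      using pF F_def by blast
    obtain c d where q: "q = (c,d)" by fastforce
    have "c \<ge> 2" using qB q Bsub by auto
    then show ?thesis using j qB p q by auto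
  qed
  have FF: "\<not> crosses p q" if "p \<in> F" "q \<in> F" for p q
    using that unfolding F_def by auto
  have ncT: "noncrossing n T"
    unfolding noncrossing_def
  proof (intro conjI Tdiag ballI)
    fix p q assume "p \<in> T" "q \<in> T"
    then show "\<not> crosses p q" unfolding T_def using ncB' Fcr FF by blast
  qed
  have maxT: "S = T" if S: "noncrossing n S" "T \<subseteq> S" for S
  proof
    show "S \<subseteq> T"
    proof
      fix p assume pS: "p \<in> S"
      obtain x y where p: "p = (x,y)" by fastforce
      have ncS: "\<And>u v. u \<in> S \<Longrightarrow> v \<in> S \<Longrightarrow> \<not> crosses u v"
        using S(1) unfolding noncrossing_def by blast
      have xy: "1 \<le> x" "y \<le> n" "y - x \<ge> 2" "\<not> (x = 1 \<and> y = n)"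
        using S(1) pS p unfolding noncrossing_def diagonals_def by auto
      have BS: "B \<subseteq> S" using S(2) T_def by auto
      show "p \<in> T"
      proof (cases "x = 1")
        case True
        have "\<not> (c < y \<and> y < d)" if "(c,d) \<in> B" for c d
        proof -
          have "c \<ge> 2" using that Bsub by auto
          moreover have "\<not> crosses p (c,d)" using ncS pS BS that by blast
          ultimately show ?thesis using p True by auto
        qed
        then have "p \<in> F" unfolding F_def using p True xy by auto
        then show ?thesis using T_def by auto
      next
        case False
        then have x2: "x \<ge> 2" using xy by simp
        have pt: "p \<in> tri 2 n" using p x2 xy by simp
        show ?thesis
        proof (rule ccontr)
          assume "p \<notin> T"
          then have pnB: "p \<notin> B" using T_def by auto
          have pnc: "\<not> crosses p q \<and> \<not> crosses q p" if "q \<in> B" for q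
            using ncS pS BS that by blast
          show False
          proof (cases "\<exists>a b. (a,b) \<in> B \<and> a \<le> x \<and> y \<le> b")
            case True
            then obtain a b where abB: "(a,b) \<in> B" and ab: "a \<le> x" "y \<le> b" by blast
            have abt: "(a,b) \<in> tri 2 n" using abB Bsub by auto
            define X where "X = insert p (B \<inter> tri a b)"
            have Xsub: "X \<subseteq> tri a b" using X_def p ab xy by auto
            have ncX: "nc X" unfolding X_def nc_def
              using ncB' pnc by (auto simp: p)
            have "int (card X) \<le> b - a - 1" using L1[OF Xsub ncX] abt by simp
            moreover have "card X = card (B \<inter> tri a b) + 1"
              using X_def pnB finite_tri by simp
            moreover have "int (card (B \<inter> tri a b)) = b - a - 1" using sparse_black[OF sp abB abt] .
            ultimately show False by linarith
          next
            case False
            have strad: "\<exists>c d. (c,d) \<in> B \<and> x \<le> c \<and> c < j \<and> j < d \<and> d \<le> y"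
              if j: "x < j" "j < y" for j
            proof -
              have "(1,j) \<notin> F"
              proof
                assume "(1,j) \<in> F"
                then have "(1,j) \<in> S" using S(2) T_def by auto
                moreover have "crosses (1,j) p" using p j x2 by simp
                ultimately show False using ncS pS by blast
              qed
              then obtain c d where cd: "(c,d) \<in> B" "c < j" "j < d"
                using F_def j x2 xy by auto
              have "\<not> crosses p (c,d)" "\<not> crosses (c,d) p" using pnc cd(1) by auto
              moreover have "\<not> (c \<le> x \<and> y \<le> d)" using False cd(1) by blast
              ultimately have "x \<le> c \<and> d \<le> y" using p cd j by auto
              then show ?thesis using cd by blast
            qed
            obtain d0 where d0: "(x,d0) \<in> B" "d0 \<le> y"
              using strad[of "x+1"] xy by force
            define D where "D = {d. (x,d) \<in> B \<and> d \<le> y}"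
            have Dfin: "finite D"
              by (rule finite_subset[of _ "{x..y}"]) (use Bsub in \<open>auto simp: D_def\<close>)
            have Dne: "d0 \<in> D" using d0 D_def by simp
            define k where "k = Max D"
            have kD: "k \<in> D" using Dfin Dne k_def by (metis Max_in empty_iff)
            have dle: "\<And>d. d \<in> D \<Longrightarrow> d \<le> k" using Dfin k_def by simp
            have xkB: "(x,k) \<in> B" "k \<le> y" using kD D_def by auto
            have kx: "k - x \<ge> 2" using xkB Bsub by auto
            have "k \<noteq> y" using xkB pnB p by auto
            then have ky: "k < y" using xkB by simp
            obtain c d where cd: "(c,d) \<in> B" "x \<le> c" "c < k" "k < d" "d \<le> y"
              using strad[of k] kx ky by auto
            show False
            proof (cases "c = x")
              case True
              then have "d \<in> D" using cd D_def by simp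
              then show False using dle cd by force
            next
              case False
              then have "crosses (x,k) (c,d)" using cd by simp
              then show False using ncB' xkB cd by blast
            qed
          qed
        qed
      qed
    qed
  qed (use S in simp)
  have "triangulation n T" unfolding triangulation_def using ncT maxT by blast
  then show ?thesis using TB by blast
qed

theorem mainTheorem3:
  fixes e :: int
  assumes "e \<ge> 4"
  shows "bij_betw (\<lambda>T. T \<inter> tri 2 (e - 1)) (triangulations (e - 1)) (sparse_colourings 2 (e - 1))"
  unfolding bij_betw_def
proof
  show "inj_on (\<lambda>T. T \<inter> tri 2 (e - 1)) (triangulations (e - 1))"
  proof (rule inj_onI)
    fix T1 T2 assume "T1 \<in> triangulations (e - 1)" "T2 \<in> triangulations (e - 1)"
      and eq: "T1 \<inter> tri 2 (e - 1) = T2 \<inter> tri 2 (e - 1)"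
    then have t: "triangulation (e-1) T1" "triangulation (e-1) T2" unfolding triangulations_def by auto
    show "T1 = T2"
    proof (rule subset_antisym)
      show "T1 \<subseteq> T2" by (rule inj_part[OF t eq])
      show "T2 \<subseteq> T1" by (rule inj_part[OF t(2,1) eq[symmetric]])
    qed
  qed
  show "(\<lambda>T. T \<inter> tri 2 (e - 1)) ` triangulations (e - 1) = sparse_colourings 2 (e - 1)"
  proof
    show "(\<lambda>T. T \<inter> tri 2 (e - 1)) ` triangulations (e - 1) \<subseteq> sparse_colourings 2 (e - 1)"
    proof
      fix B assume "B \<in> (\<lambda>T. T \<inter> tri 2 (e - 1)) ` triangulations (e - 1)"
      then obtain T where T: "triangulation (e-1) T" and B: "B = T \<inter> tri 2 (e - 1)"
        unfolding triangulations_def by blast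
      show "B \<in> sparse_colourings 2 (e - 1)"
        unfolding sparse_colourings_def using partA[OF T] B by blast
    qed
    show "sparse_colourings 2 (e - 1) \<subseteq> (\<lambda>T. T \<inter> tri 2 (e - 1)) ` triangulations (e - 1)"
    proof
      fix B assume "B \<in> sparse_colourings 2 (e - 1)"
      then obtain T where "triangulation (e-1) T" "T \<inter> tri 2 (e-1) = B"
        using surj_part unfolding sparse_colourings_def by blast
      then show "B \<in> (\<lambda>T. T \<inter> tri 2 (e - 1)) ` triangulations (e - 1)"
        unfolding triangulations_def by blast
    qed
  qed
qed

end
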